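(* Let $\sigma>0$ and $a\in(0,1/3)$. There exists $\varepsilon_0=\varepsilon_0(a,\sigma)>0$ such that for every $\varepsilon\in(0,\varepsilon_0)$ the following holds. Let $(a_n)_{n\ge0},(b_n)_{n\ge0},(c_n)_{n\ge0}$ be sequences of nonnegative real numbers with $a_0,b_0>0$, $c_0=0$, satisfying for all $n\ge0$ $$a_{n+1}\le\varepsilon^a(a_n+c_n)+\varepsilon b_n,\qquad b_{n+1}\le\varepsilon^a(b_n+c_n)+\varepsilon^{1/3}a_n,\qquad c_{n+1}\le\varepsilon^a\big(c_n+\sigma(a_n+b_n)\big).$$ Then for all $n\ge0$, $$a_n\le2\big(\varepsilon^{an/2}a_0+\varepsilon^{1/3+a(n-1)/2}b_0+\sqrt{\sigma}\,\varepsilon^{an/2}(a_0+b_0)\big),$$ $$b_n\le2\big(\varepsilon^{an/2}b_0+\varepsilon^{1/3+a(n-1)/2}a_0+\sqrt{\sigma}\,\varepsilon^{an/2}(a_0+b_0)\big),$$ $$c_n\le2\sqrt{\sigma}\,\varepsilon^{an/2}(a_0+b_0).$$ *)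

theory Defs
  imports Complex_Main
begin

end

theory Submission
  imports Defs
begin

lemma stepA:
  fixes q r u v s X Y x e An Bn Cn :: real
  assumes nn: "0\<le>q" "0\<le>r" "0\<le>u" "0\<le>v" "0\<le>s" "0\<le>X" "0\<le>Y" "0\<le>x"
   and b: "q\<le>1/4" "r\<le>1/4" "u\<le>1/4" "v\<le>1"
   and e1: "e = u*q" and e2: "e = v*r*q"
   and hA: "An \<le> x*(X+2*r*Y+2*s*(X+Y))" and hB: "Bn \<le> x*(Y+2*r*X+2*s*(X+Y))"
   and hC: "Cn \<le> 2*s*x*(X+Y)"
  shows "q*q*(An+Cn) + e*Bn \<le> q*x*(X+2*r*Y+2*s*(X+Y))"
proof -
  have e0: "0 \<le> e" using e1 nn by simp
  have h1: "q*q*(An+Cn) \<le> q*q*(x*(X+2*r*Y+2*s*(X+Y)) + 2*s*x*(X+Y))"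
    by (rule mult_left_mono) (use hA hC nn in auto)
  have h2: "e*Bn \<le> e*(x*(Y+2*r*X+2*s*(X+Y)))"
    by (rule mult_left_mono) (use hB e0 in auto)
  define w where "w = q*x"
  have w0: "0 \<le> w" using nn by (simp add: w_def)
  have t1: "q*(w*X) \<le> (1/4)*(w*X)" by (rule mult_right_mono) (use b nn w0 in auto)
  have t2: "q*(w*r*Y) \<le> (1/4)*(w*r*Y)" by (rule mult_right_mono) (use b nn w0 in auto)
  have t3: "q*(w*s*(X+Y)) \<le> (1/4)*(w*s*(X+Y))" by (rule mult_right_mono) (use b nn w0 in auto)
  have t4: "v*(w*r*Y) \<le> 1*(w*r*Y)" by (rule mult_right_mono) (use b nn w0 in auto)
  have ur: "u*r \<le> (1/4)*(1/4)" by (rule mult_mono) (use b nn in auto)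
  have t5: "(u*r)*(w*X) \<le> (1/16)*(w*X)" using mult_right_mono[OF ur, of "w*X"] nn w0 by simp
  have t6: "u*(w*s*(X+Y)) \<le> (1/4)*(w*s*(X+Y))" by (rule mult_right_mono) (use b nn w0 in auto)
  have "q*q*(x*(X+2*r*Y+2*s*(X+Y)) + 2*s*x*(X+Y)) + e*(x*(Y+2*r*X+2*s*(X+Y)))
     = q*(w*X) + 2*q*(w*r*Y) + 4*q*(w*s*(X+Y)) + v*(w*r*Y) + 2*(u*r)*(w*X) + 2*u*(w*s*(X+Y))"
    unfolding w_def using e1 e2 by (simp add: algebra_simps) (smt (verit) e1 e2 mult.commute mult.left_commute)
  moreover have "q*x*(X+2*r*Y+2*s*(X+Y)) = w*X + 2*(w*r*Y) + 2*(w*s*(X+Y))"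
    unfolding w_def by (simp add: algebra_simps)
  moreover have "0 \<le> w*X" "0 \<le> w*r*Y" "0 \<le> w*s*(X+Y)" using w0 nn by auto
  ultimately show ?thesis using h1 h2 t1 t2 t3 t4 t5 t6 by linarith
qed

lemma stepB:
  fixes q r s X Y x An Bn Cn :: real
  assumes nn: "0\<le>q" "0\<le>r" "0\<le>s" "0\<le>X" "0\<le>Y" "0\<le>x"
   and b: "q\<le>1/4" "r\<le>1/4"
   and hA: "An \<le> x*(X+2*r*Y+2*s*(X+Y))" and hB: "Bn \<le> x*(Y+2*r*X+2*s*(X+Y))"
   and hC: "Cn \<le> 2*s*x*(X+Y)"
  shows "q*q*(Bn+Cn) + (r*q)*An \<le> q*x*(Y+2*r*X+2*s*(X+Y))"
proof -
  have h1: "q*q*(Bn+Cn) \<le> q*q*(x*(Y+2*r*X+2*s*(X+Y)) + 2*s*x*(X+Y))"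
    by (rule mult_left_mono) (use hB hC nn in auto)
  have h2: "(r*q)*An \<le> (r*q)*(x*(X+2*r*Y+2*s*(X+Y)))"
    by (rule mult_left_mono) (use hA nn in auto)
  define w where "w = q*x"
  have w0: "0 \<le> w" using nn by (simp add: w_def)
  have t1: "q*(w*Y) \<le> (1/4)*(w*Y)" by (rule mult_right_mono) (use b nn w0 in auto)
  have t2: "q*(w*r*X) \<le> (1/4)*(w*r*X)" by (rule mult_right_mono) (use b nn w0 in auto)
  have t3: "q*(w*s*(X+Y)) \<le> (1/4)*(w*s*(X+Y))" by (rule mult_right_mono) (use b nn w0 in auto)
  have rr: "r*r \<le> (1/4)*(1/4)" by (rule mult_mono) (use b nn in auto)
  have t4: "(r*r)*(w*Y) \<le> (1/16)*(w*Y)" using mult_right_mono[OF rr, of "w*Y"] nn w0 by simp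
  have t5: "r*(w*s*(X+Y)) \<le> (1/4)*(w*s*(X+Y))" by (rule mult_right_mono) (use b nn w0 in auto)
  have "q*q*(x*(Y+2*r*X+2*s*(X+Y)) + 2*s*x*(X+Y)) + (r*q)*(x*(X+2*r*Y+2*s*(X+Y)))
     = q*(w*Y) + 2*q*(w*r*X) + 4*q*(w*s*(X+Y)) + (w*r*X) + 2*(r*r)*(w*Y) + 2*r*(w*s*(X+Y))"
    unfolding w_def by (simp add: algebra_simps)
  moreover have "q*x*(Y+2*r*X+2*s*(X+Y)) = w*Y + 2*(w*r*X) + 2*(w*s*(X+Y))"
    unfolding w_def by (simp add: algebra_simps)
  moreover have "0 \<le> w*Y" "0 \<le> w*r*X" "0 \<le> w*s*(X+Y)" using w0 nn by auto
  ultimately show ?thesis using h1 h2 t1 t2 t3 t4 t5 by linarith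
qed

lemma stepC:
  fixes q r s X Y x An Bn Cn :: real
  assumes nn: "0\<le>q" "0\<le>r" "0\<le>s" "0\<le>X" "0\<le>Y" "0\<le>x"
   and b: "r\<le>1/4" "q*(2+s*(2+4*s)) \<le> 2"
   and hA: "An \<le> x*(X+2*r*Y+2*s*(X+Y))" and hB: "Bn \<le> x*(Y+2*r*X+2*s*(X+Y))"
   and hC: "Cn \<le> 2*s*x*(X+Y)"
  shows "q*q*(Cn + s*s*(An+Bn)) \<le> 2*s*(q*x)*(X+Y)"
proof -
  have "An + Bn \<le> x*(X+Y)*(1+2*r+4*s)" using hA hB by (simp add: algebra_simps)
  hence "s*s*(An+Bn) \<le> s*s*(x*(X+Y)*(1+2*r+4*s))" by (rule mult_left_mono) (use nn in auto)
  hence "q*q*(Cn + s*s*(An+Bn)) \<le> q*q*(2*s*x*(X+Y) + s*s*(x*(X+Y)*(1+2*r+4*s)))"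
    using hC by (intro mult_left_mono) (use nn in auto)
  also have "\<dots> = (q*(2+s*(1+2*r+4*s))) * (q*x*s*(X+Y))" by (simp add: algebra_simps)
  also have "\<dots> \<le> 2 * (q*x*s*(X+Y))"
  proof (rule mult_right_mono)
    have "s*(1+2*r+4*s) \<le> s*(2+4*s)" by (rule mult_left_mono) (use nn b in auto)
    hence "q*(2+s*(1+2*r+4*s)) \<le> q*(2+s*(2+4*s))" by (intro mult_left_mono) (use nn in auto)
    thus "q*(2+s*(1+2*r+4*s)) \<le> 2" using b by linarith
  qed (use nn in auto)
  finally show ?thesis by (simp add: algebra_simps)
qed
theorem lemma8p5:
  fixes \<sigma> a :: real
  assumes "\<sigma> > 0" and "0 < a" and "a < 1/3"
  shows "\<exists>\<epsilon>0 > 0. \<forall>\<epsilon>::real. 0 < \<epsilon> \<and> \<epsilon> < \<epsilon>0 \<longrightarrow>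
    (\<forall>(A::nat \<Rightarrow> real) (B::nat \<Rightarrow> real) (C::nat \<Rightarrow> real).
      (\<forall>n. A n \<ge> 0 \<and> B n \<ge> 0 \<and> C n \<ge> 0) \<and> A 0 > 0 \<and> B 0 > 0 \<and> C 0 = 0 \<and>
      (\<forall>n. A (Suc n) \<le> \<epsilon> powr a * (A n + C n) + \<epsilon> * B n \<and>
           B (Suc n) \<le> \<epsilon> powr a * (B n + C n) + \<epsilon> powr (1/3) * A n \<and>
           C (Suc n) \<le> \<epsilon> powr a * (C n + \<sigma> * (A n + B n)))
      \<longrightarrow> (\<forall>n.
        A n \<le> 2 * (\<epsilon> powr (a * real n / 2) * A 0
                 + \<epsilon> powr (1/3 + a * (real n - 1) / 2) * B 0
                 + sqrt \<sigma> * \<epsilon> powr (a * real n / 2) * (A 0 + B 0)) \<and>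
        B n \<le> 2 * (\<epsilon> powr (a * real n / 2) * B 0
                 + \<epsilon> powr (1/3 + a * (real n - 1) / 2) * A 0
                 + sqrt \<sigma> * \<epsilon> powr (a * real n / 2) * (A 0 + B 0)) \<and>
        C n \<le> 2 * sqrt \<sigma> * \<epsilon> powr (a * real n / 2) * (A 0 + B 0)))"
  proof -
  define s where "s = sqrt \<sigma>"
  have s0: "0 \<le> s" and ss: "s*s = \<sigma>" using assms by (auto simp: s_def)
  define K where "K = 2+s*(2+4*s)"
  have K2: "K \<ge> 2" using s0 by (simp add: K_def)
  define d where "d = min (1/4) (1/K)"
  have d0: "0 < d" and d4: "d \<le> 1/4" and dK: "d*K \<le> 1" using K2
    by (auto simp: d_def min_def field_simps)
  have ea: "a/2 > 0" "1/3 - a/2 > 0" "1 - a/2 > 0" using assms by auto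
  define e0 where "e0 = min (d powr (2/a)) (min ((1/4) powr (1/(1/3-a/2))) (min ((1/4) powr (1/(1-a/2))) 1))"
  have e0pos: "e0 > 0" using d0 by (simp add: e0_def)
  show ?thesis
  proof (rule exI[of _ e0], rule conjI[OF e0pos], rule allI, rule impI, rule allI, rule allI, rule allI, rule impI)
    fix \<epsilon> :: real and A B C :: "nat \<Rightarrow> real"
    assume eps: "0 < \<epsilon> \<and> \<epsilon> < e0"
    hence ep: "0 < \<epsilon>" and el: "\<epsilon> < e0" by auto
    assume H: "(\<forall>n. A n \<ge> 0 \<and> B n \<ge> 0 \<and> C n \<ge> 0) \<and> A 0 > 0 \<and> B 0 > 0 \<and> C 0 = 0 \<and>
      (\<forall>n. A (Suc n) \<le> \<epsilon> powr a * (A n + C n) + \<epsilon> * B n \<and>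
           B (Suc n) \<le> \<epsilon> powr a * (B n + C n) + \<epsilon> powr (1/3) * A n \<and>
           C (Suc n) \<le> \<epsilon> powr a * (C n + \<sigma> * (A n + B n)))"
    define q where "q = \<epsilon> powr (a/2)"
    define r where "r = \<epsilon> powr (1/3 - a/2)"
    define u where "u = \<epsilon> powr (1 - a/2)"
    define v where "v = \<epsilon> powr (2/3)"
    have q0: "0 < q" "0 < r" "0 < u" "0 < v" using ep by (auto simp: q_def r_def u_def v_def)
    have "\<epsilon> \<le> d powr (2/a)" using el by (simp add: e0_def)
    hence "q \<le> (d powr (2/a)) powr (a/2)" unfolding q_def using ep ea by (intro powr_mono2) auto
    also have "\<dots> = d" using assms d0 by (simp add: powr_powr)
    finally have qd: "q \<le> d" .
    have "\<epsilon> \<le> (1/4) powr (1/(1/3-a/2))" using el by (simp add: e0_def)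
    hence "r \<le> ((1/4) powr (1/(1/3-a/2))) powr (1/3-a/2)" unfolding r_def using ep ea by (intro powr_mono2) auto
    also have "\<dots> = 1/4" using ea by (simp add: powr_powr)
    finally have r4: "r \<le> 1/4" .
    have "\<epsilon> \<le> (1/4) powr (1/(1-a/2))" using el by (simp add: e0_def)
    hence "u \<le> ((1/4) powr (1/(1-a/2))) powr (1-a/2)" unfolding u_def using ep ea by (intro powr_mono2) auto
    also have "\<dots> = 1/4" using ea by (simp add: powr_powr)
    finally have u4: "u \<le> 1/4" .
    have e1: "\<epsilon> \<le> 1" using el by (simp add: e0_def)
    have v1: "v \<le> 1" unfolding v_def using ep e1 by (intro powr_le1) auto
    have q4: "q \<le> 1/4" using qd d4 by linarith
    have qK: "q*(2+s*(2+4*s)) \<le> 2"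
    proof -
      have "q*K \<le> d*K" using qd K2 by (intro mult_right_mono) auto
      thus ?thesis using dK by (simp add: K_def)
    qed
    have pa: "\<epsilon> powr a = q*q" unfolding q_def by (simp add: powr_add[symmetric])
    have p3: "\<epsilon> powr (1/3) = r*q" unfolding q_def r_def by (simp add: powr_add[symmetric])
    have pe1: "\<epsilon> = u*q" unfolding q_def u_def using ep by (simp add: powr_add[symmetric])
    have pe2: "\<epsilon> = v*r*q" unfolding q_def r_def v_def using ep by (simp add: powr_add[symmetric])
    have pn: "\<epsilon> powr (a * real n / 2) = q^n" for n
    proof -
      have "\<epsilon> powr (a * real n / 2) = (\<epsilon> powr (a/2)) powr real n" by (simp add: powr_powr)
      thus ?thesis using q0 by (simp add: q_def powr_realpow)
    qed
    have pm: "\<epsilon> powr (1/3 + a * (real n - 1) / 2) = r * q^n" for n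
    proof -
      have "1/3 + a * (real n - 1) / 2 = (1/3 - a/2) + a * real n / 2" by (simp add: field_simps)
      hence "\<epsilon> powr (1/3 + a * (real n - 1) / 2) = r * \<epsilon> powr (a * real n / 2)"
        unfolding r_def by (subst powr_add[symmetric]) (rule arg_cong[where f="\<lambda>t. \<epsilon> powr t"])
      thus ?thesis by (simp add: pn)
    qed
    define X where "X = A 0"
    define Y where "Y = B 0"
    have X0: "0 \<le> X" "0 \<le> Y" using H by (auto simp: X_def Y_def)
    have inv: "A n \<le> q^n*(X+2*r*Y+2*s*(X+Y)) \<and> B n \<le> q^n*(Y+2*r*X+2*s*(X+Y))
       \<and> C n \<le> 2*s*q^n*(X+Y)" for n
    proof (induction n)
      case 0
      then show ?case using H X0 q0 s0 by (simp add: X_def[symmetric] Y_def[symmetric])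
    next
      case (Suc n)
      have rec: "A (Suc n) \<le> q*q*(A n + C n) + \<epsilon> * B n"
        "B (Suc n) \<le> q*q*(B n + C n) + (r*q) * A n"
        "C (Suc n) \<le> q*q*(C n + s*s * (A n + B n))" using H pa p3 ss by auto
      have xn: "0 \<le> q^n" using q0 by simp
      have a1: "q*q*(A n + C n) + \<epsilon> * B n \<le> q*q^n*(X+2*r*Y+2*s*(X+Y))"
        by (rule stepA[OF _ _ _ _ s0 X0 xn q4 r4 u4 v1 pe1 pe2]) (use q0 Suc in auto)
      have b1: "q*q*(B n + C n) + (r*q) * A n \<le> q*q^n*(Y+2*r*X+2*s*(X+Y))"
        by (rule stepB[OF _ _ s0 X0 xn q4 r4]) (use q0 Suc in auto)
      have c1: "q*q*(C n + s*s * (A n + B n)) \<le> 2*s*(q*q^n)*(X+Y)"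
        by (rule stepC[OF _ _ s0 X0 xn r4 qK]) (use q0 Suc in auto)
      show ?case using rec a1 b1 c1 by simp
    qed
    show "\<forall>n.
        A n \<le> 2 * (\<epsilon> powr (a * real n / 2) * A 0
                 + \<epsilon> powr (1/3 + a * (real n - 1) / 2) * B 0
                 + sqrt \<sigma> * \<epsilon> powr (a * real n / 2) * (A 0 + B 0)) \<and>
        B n \<le> 2 * (\<epsilon> powr (a * real n / 2) * B 0
                 + \<epsilon> powr (1/3 + a * (real n - 1) / 2) * A 0
                 + sqrt \<sigma> * \<epsilon> powr (a * real n / 2) * (A 0 + B 0)) \<and>
        C n \<le> 2 * sqrt \<sigma> * \<epsilon> powr (a * real n / 2) * (A 0 + B 0)"
    proof
      fix n
      have xn: "0 \<le> q^n" using q0 by simp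
      have "0 \<le> q^n * X" "0 \<le> q^n * Y" using xn X0 by auto
      moreover have "q^n*(X+2*r*Y+2*s*(X+Y)) = q^n*X + 2*(r*q^n*Y) + 2*(s*q^n*(X+Y))"
        "q^n*(Y+2*r*X+2*s*(X+Y)) = q^n*Y + 2*(r*q^n*X) + 2*(s*q^n*(X+Y))"
        by (simp_all add: algebra_simps)
      ultimately show "A n \<le> 2 * (\<epsilon> powr (a * real n / 2) * A 0
                 + \<epsilon> powr (1/3 + a * (real n - 1) / 2) * B 0
                 + sqrt \<sigma> * \<epsilon> powr (a * real n / 2) * (A 0 + B 0)) \<and>
        B n \<le> 2 * (\<epsilon> powr (a * real n / 2) * B 0
                 + \<epsilon> powr (1/3 + a * (real n - 1) / 2) * A 0
                 + sqrt \<sigma> * \<epsilon> powr (a * real n / 2) * (A 0 + B 0)) \<and>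
        C n \<le> 2 * sqrt \<sigma> * \<epsilon> powr (a * real n / 2) * (A 0 + B 0)"
        using inv[of n] unfolding pn pm s_def[symmetric] X_def[symmetric] Y_def[symmetric]
        by (simp add: algebra_simps)
    qed
  qed
qed

end
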